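(* Let $X$ be a metric space, $(M,\rho)$ a complete metric space, and $(G_i)_{i\ge1}$ a sequence of homotopically dense $G_\delta$-subsets of $C(X,M)$. Then $\bigcap_{i\ge1}G_i$ is homotopically dense in $C(X,M)$.
   Context: $C(X,M)$ carries the source limitation topology: the neighborhood base at $f$ consists of the sets $\{g:\rho(g(x),f(x))<\varepsilon(x)\ \forall x\in X\}$, $\varepsilon\colon X\to(0,1]$ continuous. A set $U\subset C(X,M)$ is homotopically dense if for every $g\in C(X,M)$ and every continuous $\varepsilon\colon X\to(0,1]$ there is $g'\in U$ which is $\varepsilon$-homotopic to $g$, meaning there is a homotopy $h\colon X\times[0,1]\to M$ from $g$ to $g'$ with $\operatorname{diam}h(\{x\}\times[0,1])<\varepsilon(x)$ for all $x\in X$. *)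

theory Defs
  imports "HOL-Analysis.Analysis"
begin

text \<open>The space C(X,M) of continuous maps between (abstract) metric spaces (X,d) and (M,rho);
  maps are represented by HOL functions that are extensional on X (undefined off X).\<close>
definition CXM :: "'a set \<Rightarrow> ('a \<Rightarrow> 'a \<Rightarrow> real) \<Rightarrow> 'b set \<Rightarrow> ('b \<Rightarrow> 'b \<Rightarrow> real) \<Rightarrow> ('a \<Rightarrow> 'b) set" where
  "CXM X d M rho = {f. continuous_map (Metric_space.mtopology X d) (Metric_space.mtopology M rho) f
                        \<and> f \<in> extensional X}"

definition ctrl :: "'a set \<Rightarrow> ('a \<Rightarrow> 'a \<Rightarrow> real) \<Rightarrow> ('a \<Rightarrow> real) \<Rightarrow> bool" where
  "ctrl X d eps \<longleftrightarrow> continuous_map (Metric_space.mtopology X d) euclideanreal eps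
                     \<and> (\<forall>x\<in>X. 0 < eps x \<and> eps x \<le> 1)"

definition slnbhd :: "'a set \<Rightarrow> ('a \<Rightarrow> 'a \<Rightarrow> real) \<Rightarrow> 'b set \<Rightarrow> ('b \<Rightarrow> 'b \<Rightarrow> real)
                      \<Rightarrow> ('a \<Rightarrow> 'b) \<Rightarrow> ('a \<Rightarrow> real) \<Rightarrow> ('a \<Rightarrow> 'b) set" where
  "slnbhd X d M rho f eps = {g \<in> CXM X d M rho. \<forall>x\<in>X. rho (g x) (f x) < eps x}"

definition sl_open :: "'a set \<Rightarrow> ('a \<Rightarrow> 'a \<Rightarrow> real) \<Rightarrow> 'b set \<Rightarrow> ('b \<Rightarrow> 'b \<Rightarrow> real)
                      \<Rightarrow> ('a \<Rightarrow> 'b) set \<Rightarrow> bool" where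
  "sl_open X d M rho U \<longleftrightarrow> U \<subseteq> CXM X d M rho \<and>
     (\<forall>f\<in>U. \<exists>eps. ctrl X d eps \<and> slnbhd X d M rho f eps \<subseteq> U)"

lemma istopology_sl_open: "istopology (sl_open X d M rho)"
  unfolding istopology_def
proof (intro conjI allI impI)
  fix S T assume S: "sl_open X d M rho S" and T: "sl_open X d M rho T"
  show "sl_open X d M rho (S \<inter> T)"
    unfolding sl_open_def
  proof (intro conjI ballI)
    show "S \<inter> T \<subseteq> CXM X d M rho" using S unfolding sl_open_def by (simp add: le_infI1)
    fix f assume f: "f \<in> S \<inter> T"
    then obtain e1 e2 where e1: "ctrl X d e1" "slnbhd X d M rho f e1 \<subseteq> S"
      and e2: "ctrl X d e2" "slnbhd X d M rho f e2 \<subseteq> T"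
      using S T unfolding sl_open_def by (meson IntD1 IntD2)
    have "ctrl X d (\<lambda>x. min (e1 x) (e2 x))"
      using e1(1) e2(1) unfolding ctrl_def by (simp add: continuous_map_real_min min_le_iff_disj)
    moreover have "slnbhd X d M rho f (\<lambda>x. min (e1 x) (e2 x)) \<subseteq> S \<inter> T"
      using e1(2) e2(2) unfolding slnbhd_def by (auto simp: subset_iff)
    ultimately show "\<exists>eps. ctrl X d eps \<and> slnbhd X d M rho f eps \<subseteq> S \<inter> T" by blast
  qed
next
  fix K assume K: "\<forall>S\<in>K. sl_open X d M rho S"
  show "sl_open X d M rho (\<Union>K)"
    unfolding sl_open_def
  proof (intro conjI ballI)
    show "\<Union>K \<subseteq> CXM X d M rho" using K unfolding sl_open_def by (simp add: Sup_least)
    fix f assume "f \<in> \<Union>K"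
    then obtain S where "S \<in> K" "f \<in> S" by blast
    then show "\<exists>eps. ctrl X d eps \<and> slnbhd X d M rho f eps \<subseteq> \<Union>K"
      using K unfolding sl_open_def by (meson Union_upper order_trans)
  qed
qed

definition sl_topology :: "'a set \<Rightarrow> ('a \<Rightarrow> 'a \<Rightarrow> real) \<Rightarrow> 'b set \<Rightarrow> ('b \<Rightarrow> 'b \<Rightarrow> real)
                           \<Rightarrow> ('a \<Rightarrow> 'b) topology" where
  "sl_topology X d M rho = topology (sl_open X d M rho)"

definition mdiam :: "('b \<Rightarrow> 'b \<Rightarrow> real) \<Rightarrow> 'b set \<Rightarrow> real" where
  "mdiam rho S = Sup {rho a b | a b. a \<in> S \<and> b \<in> S}"

definition eps_homotopic :: "'a set \<Rightarrow> ('a \<Rightarrow> 'a \<Rightarrow> real) \<Rightarrow> 'b set \<Rightarrow> ('b \<Rightarrow> 'b \<Rightarrow> real)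
                             \<Rightarrow> ('a \<Rightarrow> real) \<Rightarrow> ('a \<Rightarrow> 'b) \<Rightarrow> ('a \<Rightarrow> 'b) \<Rightarrow> bool" where
  "eps_homotopic X d M rho eps g g' \<longleftrightarrow>
     (\<exists>h :: 'a \<times> real \<Rightarrow> 'b.
        continuous_map (prod_topology (Metric_space.mtopology X d) (top_of_set {0..1}))
                       (Metric_space.mtopology M rho) h
      \<and> (\<forall>x\<in>X. h (x, 0) = g x \<and> h (x, 1) = g' x)
      \<and> (\<forall>x\<in>X. mdiam rho (h ` ({x} \<times> {0..1})) < eps x))"

definition homotopically_dense :: "'a set \<Rightarrow> ('a \<Rightarrow> 'a \<Rightarrow> real) \<Rightarrow> 'b set \<Rightarrow> ('b \<Rightarrow> 'b \<Rightarrow> real)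
                                   \<Rightarrow> ('a \<Rightarrow> 'b) set \<Rightarrow> bool" where
  "homotopically_dense X d M rho U \<longleftrightarrow>
     (\<forall>g \<in> CXM X d M rho. \<forall>eps. ctrl X d eps \<longrightarrow>
        (\<exists>g' \<in> U. eps_homotopic X d M rho eps g g'))"

end

theory Submission imports Defs begin

lemma clamp_cont: "continuous_map euclideanreal (top_of_set {0..1::real}) (\<lambda>s. max 0 (min 1 s))"
  by (auto simp: continuous_map_in_subtopology intro!: continuous_intros)

lemma sl_openin: "openin (sl_topology X d M rho) U = sl_open X d M rho U"
  by (simp add: sl_topology_def istopology_sl_open)

lemma sl_topspace: "topspace (sl_topology X d M rho) = CXM X d M rho"
proof -
  have "sl_open X d M rho (CXM X d M rho)"
    unfolding sl_open_def
  proof (intro conjI ballI subset_refl)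
    fix f assume "f \<in> CXM X d M rho"
    have "ctrl X d (\<lambda>x. 1)" by (simp add: ctrl_def)
    moreover have "slnbhd X d M rho f (\<lambda>x. 1) \<subseteq> CXM X d M rho" by (auto simp: slnbhd_def)
    ultimately show "\<exists>eps. ctrl X d eps \<and> slnbhd X d M rho f eps \<subseteq> CXM X d M rho" by blast
  qed
  then show ?thesis unfolding topspace_def sl_openin
    by (auto simp: sl_open_def)
qed

lemma hd_mono: "A \<subseteq> B \<Longrightarrow> homotopically_dense X d M rho A \<Longrightarrow> homotopically_dense X d M rho B"
  unfolding homotopically_dense_def by blast

lemma step:
  assumes "sl_open X d M rho V" "homotopically_dense X d M rho V" "f \<in> CXM X d M rho" "ctrl X d e"
  shows "\<exists>f' e'. f' \<in> V \<and> eps_homotopic X d M rho e f f' \<and> ctrl X d e' \<and> (\<forall>x\<in>X. e' x \<le> e x / 2)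
     \<and> (\<forall>q\<in>CXM X d M rho. (\<forall>x\<in>X. rho (q x) (f' x) \<le> 2 * e' x) \<longrightarrow> q \<in> V)"
proof -
  obtain f' where f': "f' \<in> V" "eps_homotopic X d M rho e f f'"
    using assms(2,3,4) unfolding homotopically_dense_def by blast
  obtain \<delta> where \<delta>: "ctrl X d \<delta>" "slnbhd X d M rho f' \<delta> \<subseteq> V"
    using assms(1) f'(1) unfolding sl_open_def by blast
  define e' where "e' = (\<lambda>x. min (e x / 2) (\<delta> x / 3))"
  have "ctrl X d e'"
    using assms(4) \<delta>(1) unfolding ctrl_def e'_def
    by (auto intro!: continuous_map_real_min continuous_intros simp: min_le_iff_disj)
  moreover have "\<forall>x\<in>X. e' x \<le> e x / 2" unfolding e'_def by (auto simp: min_def)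
  moreover have "\<forall>q\<in>CXM X d M rho. (\<forall>x\<in>X. rho (q x) (f' x) \<le> 2 * e' x) \<longrightarrow> q \<in> V"
  proof (intro ballI impI)
    fix q assume q: "q \<in> CXM X d M rho" "\<forall>x\<in>X. rho (q x) (f' x) \<le> 2 * e' x"
    have "\<forall>x\<in>X. rho (q x) (f' x) < \<delta> x"
    proof
      fix x assume "x \<in> X"
      then have "rho (q x) (f' x) \<le> 2 * e' x" "0 < \<delta> x" using q \<delta>(1) by (auto simp: ctrl_def)
      then show "rho (q x) (f' x) < \<delta> x" unfolding e'_def by linarith
    qed
    then show "q \<in> V" using q(1) \<delta>(2) by (auto simp: slnbhd_def)
  qed
  ultimately show ?thesis using f' by blast
qed

lemma diam_bound:
  fixes h :: "'a \<times> real \<Rightarrow> 'b"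
  assumes MM: "Metric_space M rho"
   and h: "continuous_map (prod_topology (Metric_space.mtopology X d) (top_of_set {0..1})) (Metric_space.mtopology M rho) h"
   and MX: "Metric_space X d" and x: "x \<in> X" and dm: "mdiam rho (h ` ({x}\<times>{0..1})) < c"
   and a: "a \<in> h ` ({x}\<times>{0..1})" and b: "b \<in> h ` ({x}\<times>{0..1})"
  shows "rho a b < c"
proof -
  interpret MM: Metric_space M rho by fact
  interpret MX: Metric_space X d by fact
  have "continuous_map (top_of_set {0..1::real}) (prod_topology MX.mtopology (top_of_set {0..1::real})) (\<lambda>t. (x, t))"
    using x by (auto simp: continuous_map_pairwise o_def)
  then have c1: "continuous_map (top_of_set {0..1::real}) MM.mtopology (h \<circ> (\<lambda>t. (x, t)))"
    using h by (rule continuous_map_compose)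
  have "compactin (top_of_set {0..1::real}) {0..1}"
    unfolding compactin_subtopology compactin_euclidean_iff by simp
  then have "compactin MM.mtopology ((h \<circ> (\<lambda>t. (x, t))) ` {0..1})"
    by (rule image_compactin[OF _ c1])
  moreover have "(h \<circ> (\<lambda>t. (x, t))) ` {0..1} = h ` ({x}\<times>{0..1})" by auto
  ultimately have "MM.mbounded (h ` ({x}\<times>{0..1}))" using MM.compactin_imp_mbounded by simp
  then obtain B where B: "\<forall>u\<in>h ` ({x}\<times>{0..1}). \<forall>v\<in>h ` ({x}\<times>{0..1}). rho u v \<le> B"
    unfolding MM.mbounded_alt by blast
  have "rho a b \<le> mdiam rho (h ` ({x}\<times>{0..1}))"
    unfolding mdiam_def
    proof (rule cSup_upper)
    show "rho a b \<in> {rho a b |a b. a \<in> h ` ({x} \<times> {0..1}) \<and> b \<in> h ` ({x} \<times> {0..1})}" using a b by blast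
    show "bdd_above {rho a b |a b. a \<in> h ` ({x} \<times> {0..1}) \<and> b \<in> h ` ({x} \<times> {0..1})}"
      unfolding bdd_above_def using B by blast
  qed
  with dm show ?thesis by linarith
qed

lemma lim_le:
  assumes MM: "Metric_space M rho"
    and conv: "\<And>\<epsilon>. 0 < \<epsilon> \<Longrightarrow> \<forall>\<^sub>F n in sequentially. rho (F n) l < \<epsilon>"
    and FM: "\<And>n. F n \<in> M" and lM: "l \<in> M" and aM: "a \<in> M"
    and bd: "\<And>n. n \<ge> N \<Longrightarrow> rho (F n) a \<le> c"
  shows "rho l a \<le> c"
proof (rule field_le_epsilon)
  interpret MM: Metric_space M rho by fact
  fix \<epsilon> :: real assume "0 < \<epsilon>"
  then obtain K where K: "\<And>n. n \<ge> K \<Longrightarrow> rho (F n) l < \<epsilon>"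
    using conv unfolding eventually_sequentially by blast
  have "rho l a \<le> rho l (F (max K N)) + rho (F (max K N)) a"
    using MM.triangle FM lM aM by blast
  also have "\<dots> < \<epsilon> + c"
    using K[of "max K N"] bd[of "max K N"] MM.commute by (smt (verit) max.cobounded1 max.cobounded2)
  finally show "rho l a \<le> c + \<epsilon>" by simp
qed

lemma main:
  fixes V :: "nat \<Rightarrow> ('a \<Rightarrow> 'b) set"
  assumes MX: "Metric_space X d" and MM: "Metric_space M rho" and comp: "Metric_space.mcomplete M rho"
    and Vo: "\<And>k. sl_open X d M rho (V k)" and Vd: "\<And>k. homotopically_dense X d M rho (V k)"
  shows "homotopically_dense X d M rho (\<Inter>k. V k)"
  unfolding homotopically_dense_def
proof (intro ballI allI impI)
  fix g eps assume g: "g \<in> CXM X d M rho" and eps: "ctrl X d eps"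
  interpret MX: Metric_space X d by fact
  interpret MM: Metric_space M rho by fact
  let ?C = "CXM X d M rho"
  let ?P = "\<lambda>k f e f' e'. f' \<in> V k \<and> eps_homotopic X d M rho e f f' \<and> ctrl X d e' \<and> (\<forall>x\<in>X. e' x \<le> e x / 2) \<and> (\<forall>q\<in>?C. (\<forall>x\<in>X. rho (q x) (f' x) \<le> 2 * e' x) \<longrightarrow> q \<in> V k)"
  have "\<forall>k f e. \<exists>fe'. (f \<in> ?C \<and> ctrl X d e) \<longrightarrow> ?P k f e (fst fe') (snd fe')"
    using step[OF Vo Vd] by fastforce
  then obtain S :: "nat \<Rightarrow> ('a\<Rightarrow>'b) \<Rightarrow> ('a\<Rightarrow>real) \<Rightarrow> ('a\<Rightarrow>'b)\<times>('a\<Rightarrow>real)" where S: "\<And>k f e. f \<in> ?C \<Longrightarrow> ctrl X d e \<Longrightarrow> ?P k f e (fst (S k f e)) (snd (S k f e))"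
    by metis
  define fe where "fe = rec_nat (g, \<lambda>x. eps x / 5) (\<lambda>k p. S k (fst p) (snd p))"
  define f where "f k = fst (fe k)" for k
  define e where "e k = snd (fe k)" for k
  have f0: "f 0 = g" and e0: "e 0 = (\<lambda>x. eps x / 5)" by (simp_all add: f_def e_def fe_def)
  have fS: "f (Suc k) = fst (S k (f k) (e k))" and eS: "e (Suc k) = snd (S k (f k) (e k))" for k
    by (simp_all add: f_def e_def fe_def)
  have inv: "f k \<in> ?C \<and> ctrl X d (e k)" for k
  proof (induction k)
    case 0 show ?case using g eps by (auto simp: f0 e0 ctrl_def intro!: continuous_intros)
  next
    case (Suc k)
    then have "?P k (f k) (e k) (f (Suc k)) (e (Suc k))" using S[of "f k" "e k" k] by (simp add: fS eS)
    then show ?case using Vo[of k] unfolding sl_open_def by blast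
  qed
  have Pk: "?P k (f k) (e k) (f (Suc k)) (e (Suc k))" for k using S[of "f k" "e k" k] inv[of k] by (simp add: fS eS)
  have epos: "0 < e k x" if "x \<in> X" for k x using inv[of k] that by (auto simp: ctrl_def)
  have ehalf: "e (Suc k) x \<le> e k x / 2" if "x \<in> X" for k x using Pk[of k] that by blast
  have esmall: "e k x \<le> 1 / 2^k" if "x \<in> X" for k x
  proof (induction k)
    case 0 show ?case using eps that by (auto simp: e0 ctrl_def)
  next
    case (Suc k)
    have "e (Suc k) x \<le> e k x / 2" by (rule ehalf[OF that])
    also have "\<dots> \<le> (1/2^k)/2" using Suc by (intro divide_right_mono) auto
    also have "\<dots> = 1/2^Suc k" by simp
    finally show ?case .
  qed
  let ?Z = "prod_topology MX.mtopology (top_of_set {0..1::real})"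
  have "\<forall>k. \<exists>h :: 'a \<times> real \<Rightarrow> 'b. continuous_map ?Z MM.mtopology h \<and> (\<forall>x\<in>X. h (x,0) = f k x \<and> h (x,1) = f (Suc k) x) \<and> (\<forall>x\<in>X. mdiam rho (h ` ({x}\<times>{0..1})) < e k x)"
    using Pk unfolding eps_homotopic_def by blast
  then obtain h :: "nat \<Rightarrow> 'a \<times> real \<Rightarrow> 'b" where
    hc: "\<And>k. continuous_map ?Z MM.mtopology (h k)" and
    hends: "\<And>k x. x\<in>X \<Longrightarrow> h k (x,0) = f k x \<and> h k (x,1) = f (Suc k) x" and
    hdiam: "\<And>k x. x\<in>X \<Longrightarrow> mdiam rho (h k ` ({x}\<times>{0..1})) < e k x"
    by metis
  define tt :: "nat \<Rightarrow> real" where "tt n = 1 - 1/2^n" for n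
  define cl :: "real \<Rightarrow> real" where "cl s = max 0 (min 1 s)" for s
  define F where "F = rec_nat (\<lambda>p. f 0 (fst p)) (\<lambda>n Fn p. if snd p \<le> tt n then Fn p else h n (fst p, cl (2^Suc n * (snd p - tt n))))"
  have F0: "F 0 = (\<lambda>p. f 0 (fst p))" by (simp add: F_def)
  have FS: "F (Suc n) = (\<lambda>p. if snd p \<le> tt n then F n p else h n (fst p, cl (2^Suc n * (snd p - tt n))))" for n
    unfolding F_def by simp
  have tZ: "topspace ?Z = X \<times> {0..1}" by simp
  have tt0: "0 \<le> tt n" "tt n \<le> 1" for n by (auto simp: tt_def)
  have ttlt: "tt n < tt (Suc n)" for n by (simp add: tt_def divide_strict_left_mono)
  have ttS: "2^Suc n * (tt (Suc n) - tt n) = 1" for n by (simp add: tt_def field_simps)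
  have clr: "cl s \<in> {0..1}" for s by (simp add: cl_def)
  have cl0: "cl 0 = 0" and cl1: "s \<ge> 1 \<Longrightarrow> cl s = 1" for s by (auto simp: cl_def)
  have clc: "continuous_map ?Z ?Z (\<lambda>p. (fst p, cl (2^Suc n * (snd p - tt n))))" for n
  proof -
    have "continuous_map ?Z euclideanreal snd"
      using continuous_map_snd[of "MX.mtopology" "top_of_set {0..1::real}"]
      by (rule continuous_map_into_fulltopology)
    then have "continuous_map ?Z euclideanreal (\<lambda>p. 2^Suc n * (snd p - tt n))"
      by (intro continuous_intros)
    then have "continuous_map ?Z (top_of_set {0..1}) (cl \<circ> (\<lambda>p. 2^Suc n * (snd p - tt n)))"
      using clamp_cont unfolding cl_def by (rule continuous_map_compose)
    then show ?thesis
      by (simp add: continuous_map_pairwise o_def cl_def continuous_map_fst)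
  qed
  have Fprop: "continuous_map ?Z MM.mtopology (F n) \<and> (\<forall>x\<in>X. \<forall>t\<in>{0..1}. tt n \<le> t \<longrightarrow> F n (x,t) = f n x)" for n
  proof (induction n)
    case 0
    have "continuous_map ?Z MM.mtopology (f 0 \<circ> fst)"
      using continuous_map_fst inv[of 0] unfolding CXM_def by (blast intro: continuous_map_compose)
    then show ?case by (simp add: F0 o_def)
  next
    case (Suc n)
    have c: "continuous_map ?Z MM.mtopology (\<lambda>p. if snd p \<le> tt n then F n p else h n (fst p, cl (2^Suc n * (snd p - tt n))))"
    proof (rule continuous_map_cases_le)
      show "continuous_map ?Z euclideanreal snd"
        using continuous_map_snd[of "MX.mtopology" "top_of_set {0..1::real}"]
        by (rule continuous_map_into_fulltopology)
      show "continuous_map ?Z euclideanreal (\<lambda>p. tt n)" by simp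
      show "continuous_map (subtopology ?Z {p \<in> topspace ?Z. snd p \<le> tt n}) MM.mtopology (F n)"
        using Suc.IH by (blast intro: continuous_map_from_subtopology)
      have "continuous_map ?Z MM.mtopology (h n \<circ> (\<lambda>p. (fst p, cl (2^Suc n * (snd p - tt n)))))"
        using clc hc by (rule continuous_map_compose)
      then show "continuous_map (subtopology ?Z {p \<in> topspace ?Z. tt n \<le> snd p}) MM.mtopology (\<lambda>p. h n (fst p, cl (2^Suc n * (snd p - tt n))))"
        by (simp add: o_def continuous_map_from_subtopology)
      fix p assume "p \<in> topspace ?Z" "snd p = tt n"
      then show "F n p = h n (fst p, cl (2^Suc n * (snd p - tt n)))"
        using Suc.IH hends[of "fst p" n] by (auto simp: cl0)
    qed
    have "\<forall>x\<in>X. \<forall>t\<in>{0..1}. tt (Suc n) \<le> t \<longrightarrow> F (Suc n) (x,t) = f (Suc n) x"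
    proof (intro ballI impI)
      fix x t assume x: "x \<in> X" and t: "t \<in> {0..1}" "tt (Suc n) \<le> t"
      have "\<not> t \<le> tt n" using t ttlt[of n] by linarith
      moreover have "2^Suc n * (t - tt n) \<ge> 1"
      proof -
        have "2^Suc n * (tt (Suc n) - tt n) \<le> 2^Suc n * (t - tt n)" using t by (intro mult_left_mono) auto
        then show ?thesis using ttS[of n] by linarith
      qed
      ultimately show "F (Suc n) (x,t) = f (Suc n) x"
        using hends[OF x, of n] by (simp add: FS cl1)
    qed
    with c show ?case by (simp add: FS)
  qed
  have FM: "F n (x,t) \<in> M" if "x \<in> X" "t \<in> {0..1}" for n x t
    using Fprop[of n] that unfolding continuous_map_def by auto
  have fM: "f n x \<in> M" if "x \<in> X" for n x
    using Fprop[of n] FM[OF that, of 1 n] that tt0[of n] by auto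
  have Fstep: "rho (F (Suc n) (x,t)) (F n (x,t)) \<le> e n x" if x: "x \<in> X" and t: "t \<in> {0..1}" for n x t
  proof (cases "t \<le> tt n")
    case True
    then show ?thesis using FM[OF x t, of n] epos[OF x, of n] by (simp add: FS)
  next
    case False
    then have a: "F n (x,t) = f n x" using Fprop[of n] x t by auto
    have "rho (h n (x, cl (2^Suc n * (t - tt n)))) (h n (x,0)) < e n x"
      by (rule diam_bound[OF MM hc MX x hdiam[OF x]]) (use clr in auto)
    then show ?thesis using False a hends[OF x, of n] by (simp add: FS)
  qed
  have Fmn: "rho (F n (x,t)) (F m (x,t)) \<le> 2 * e m x - 2 * e n x" if x: "x \<in> X" and t: "t \<in> {0..1}" and mn: "m \<le> n" for m n x t
    using mn
  proof (induction n rule: dec_induct)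
    case base then show ?case using FM[OF x t, of m] by simp
  next
    case (step n)
    have "rho (F (Suc n) (x,t)) (F m (x,t)) \<le> rho (F (Suc n) (x,t)) (F n (x,t)) + rho (F n (x,t)) (F m (x,t))"
      using MM.triangle FM[OF x t] by blast
    then show ?case using step.IH Fstep[OF x t, of n] ehalf[OF x, of n] by linarith
  qed
  have Fbd: "rho (F n (x,t)) (F m (x,t)) \<le> 2 / 2^m" if x: "x \<in> X" and t: "t \<in> {0..1}" and mn: "m \<le> n" for m n x t
  proof -
    have "rho (F n (x,t)) (F m (x,t)) \<le> 2 * e m x" using Fmn[OF x t mn] epos[OF x, of n] by linarith
    also have "\<dots> \<le> 2 * (1/2^m)" using esmall[OF x, of m] by linarith
    finally show ?thesis by simp
  qed
  have Cauchy: "\<exists>N. \<forall>m n p. N \<le> m \<longrightarrow> N \<le> n \<longrightarrow> p \<in> topspace ?Z \<longrightarrow> rho (F m p) (F n p) < \<epsilon>" if epsp: "\<epsilon> > 0" for \<epsilon>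
  proof -
    obtain N where N: "(1/2::real)^N < \<epsilon>/2" using real_arch_pow_inv[of "\<epsilon>/2" "1/2"] epsp by auto
    have "rho (F m p) (F n p) < \<epsilon>" if mnp: "N \<le> m" "N \<le> n" "p \<in> topspace ?Z" for m n p
    proof -
      obtain x t where p: "p = (x,t)" "x \<in> X" "t \<in> {0..1}" using mnp(3) by auto
      have "(2::real)^N \<le> 2^(min m n)" by (rule power_increasing) (use mnp in auto)
      then have "(2::real) / 2^(min m n) \<le> 2 / 2^N"
        by (intro divide_left_mono) auto
      moreover have "(2::real)/2^N < \<epsilon>" using N by (simp add: power_one_over field_simps)
      moreover have "rho (F m p) (F n p) \<le> 2 / 2^(min m n)"
      proof (cases "m \<le> n")
        case True then show ?thesis using Fbd[OF p(2,3) True] MM.commute p by (simp add: min_def)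
      next
        case False then show ?thesis using Fbd[OF p(2,3), of n m] p by (simp add: min_def)
      qed
      ultimately show ?thesis by linarith
    qed
    then show ?thesis by blast
  qed
  have ev: "\<forall>\<^sub>F n in sequentially. continuous_map ?Z MM.mtopology (F n)" using Fprop by simp
  from MM.continuous_map_uniformly_Cauchy_limit[OF comp ev Cauchy]
  obtain H where Hc: "continuous_map ?Z MM.mtopology H"
    and Hlim: "\<And>\<epsilon>. 0 < \<epsilon> \<Longrightarrow> \<forall>\<^sub>F n in sequentially. \<forall>p\<in>topspace ?Z. rho (F n p) (H p) < \<epsilon>"
    by blast
  have HM: "H (x,t) \<in> M" if "x \<in> X" "t \<in> {0..1}" for x t
    using Hc that unfolding continuous_map_def by auto
  have Hbound: "rho (H (x,t)) a \<le> c" if x: "x \<in> X" and t: "t \<in> {0..1}" and a: "a \<in> M"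
     and bd: "\<And>n. n \<ge> N \<Longrightarrow> rho (F n (x,t)) a \<le> c" for x t a c N
  proof (rule lim_le[OF MM _ _ HM[OF x t] a bd])
    fix \<epsilon> :: real assume "0 < \<epsilon>"
    from Hlim[OF this] show "\<forall>\<^sub>F n in sequentially. rho (F n (x, t)) (H (x, t)) < \<epsilon>"
      by eventually_elim (use x t in auto)
  qed (use FM[OF x t] in auto)
  have gM: "g x \<in> M" if "x \<in> X" for x using fM[OF that, of 0] f0 by simp
  have F0t: "F n (x,0) = g x" if "x \<in> X" for n x
  proof (induction n)
    case 0 then show ?case by (simp add: F0 f0)
  next
    case (Suc n) then show ?case using tt0[of n] by (simp add: FS)
  qed
  have H0: "H (x,0) = g x" if x: "x \<in> X" for x
  proof -
    have "rho (H (x,0)) (g x) \<le> 0"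
      by (rule Hbound[OF x _ gM[OF x], of 0 0]) (use F0t[OF x] gM[OF x] in auto)
    then have "rho (H (x,0)) (g x) = 0" using MM.nonneg[of "H (x,0)" "g x"] by linarith
    then show ?thesis using HM[OF x, of 0] gM[OF x] by simp
  qed
  define g' where "g' x = (if x \<in> X then H (x,1) else undefined)" for x
  have g'C: "g' \<in> ?C"
  proof -
    have "continuous_map MX.mtopology ?Z (\<lambda>x. (x, 1::real))"
      by (auto simp: continuous_map_pairwise o_def)
    then have "continuous_map MX.mtopology MM.mtopology (H \<circ> (\<lambda>x. (x, 1::real)))"
      using Hc by (rule continuous_map_compose)
    then have "continuous_map MX.mtopology MM.mtopology g'"
      by (rule continuous_map_eq) (simp add: g'_def)
    moreover have "g' \<in> extensional X" by (simp add: extensional_def g'_def)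
    ultimately show ?thesis by (simp add: CXM_def)
  qed
  have g'V: "g' \<in> V k" for k
  proof -
    have "\<forall>x\<in>X. rho (g' x) (f (Suc k) x) \<le> 2 * e (Suc k) x"
    proof
      fix x assume x: "x \<in> X"
      have "rho (H (x,1)) (f (Suc k) x) \<le> 2 * e (Suc k) x"
      proof (rule Hbound[of x 1 "f (Suc k) x" "Suc k"])
        fix n assume n: "Suc k \<le> n"
        have "F (Suc k) (x,1) = f (Suc k) x" using Fprop[of "Suc k"] x tt0[of "Suc k"] by auto
        then show "rho (F n (x,1)) (f (Suc k) x) \<le> 2 * e (Suc k) x"
          using Fmn[OF x _ n, of 1] epos[OF x, of n] by auto
      qed (use x fM[OF x] in auto)
      then show "rho (g' x) (f (Suc k) x) \<le> 2 * e (Suc k) x" using x by (simp add: g'_def)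
    qed
    then show ?thesis using Pk[of k] g'C by blast
  qed
  have "eps_homotopic X d M rho eps g g'"
    unfolding eps_homotopic_def
  proof (intro exI conjI ballI)
    show "continuous_map ?Z MM.mtopology H" by (rule Hc)
    fix x assume x: "x \<in> X"
    show "H (x,0) = g x" by (rule H0[OF x])
    show "H (x,1) = g' x" using x by (simp add: g'_def)
    have pt: "rho (H (x,t)) (g x) \<le> 2 * e 0 x" if t: "t \<in> {0..1}" for t
    proof (rule Hbound[of x t "g x" 0, OF x t gM[OF x]])
      fix n :: nat
      show "rho (F n (x,t)) (g x) \<le> 2 * e 0 x"
        using Fmn[OF x t, of 0 n] epos[OF x, of n] by (simp add: F0 f0)
    qed
    have ep: "0 < eps x" using eps x by (auto simp: ctrl_def)
    have "mdiam rho (H ` ({x} \<times> {0..1})) \<le> 4 * e 0 x"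
      unfolding mdiam_def
    proof (rule cSup_least)
      show "{rho a b |a b. a \<in> H ` ({x} \<times> {0..1}) \<and> b \<in> H ` ({x} \<times> {0..1})} \<noteq> {}"
      proof -
        have "H (x,0) \<in> H ` ({x} \<times> {0..1})" by auto
        then show ?thesis by blast
      qed
      fix r assume "r \<in> {rho a b |a b. a \<in> H ` ({x} \<times> {0..1}) \<and> b \<in> H ` ({x} \<times> {0..1})}"
      then obtain t s where ts: "t \<in> {0..1}" "s \<in> {0..1}" "r = rho (H (x,t)) (H (x,s))" by auto
      have "rho (H (x,t)) (H (x,s)) \<le> rho (H (x,t)) (g x) + rho (g x) (H (x,s))"
        using MM.triangle HM[OF x] gM[OF x] ts by blast
      then show "r \<le> 4 * e 0 x" using pt[OF ts(1)] pt[OF ts(2)] MM.commute[of "g x" "H (x,s)"] ts(3) by linarith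
    qed
    then show "mdiam rho (H ` ({x} \<times> {0..1})) < eps x" using ep by (simp add: e0)
  qed
  then show "\<exists>g'\<in>(\<Inter>k. V k). eps_homotopic X d M rho eps g g'" using g'V by blast
qed

theorem corollary2p6:
  fixes X :: "'a set" and d :: "'a \<Rightarrow> 'a \<Rightarrow> real"
    and M :: "'b set" and rho :: "'b \<Rightarrow> 'b \<Rightarrow> real"
    and G :: "nat \<Rightarrow> ('a \<Rightarrow> 'b) set"
  assumes "Metric_space X d"
    and "Metric_space M rho" and "Metric_space.mcomplete M rho"
    and "\<And>i. gdelta_in (sl_topology X d M rho) (G i)"
    and "\<And>i. homotopically_dense X d M rho (G i)"
  shows "homotopically_dense X d M rho (\<Inter>i. G i)"
proof -
  let ?T = "sl_topology X d M rho"
  let ?C = "CXM X d M rho"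
  have "\<forall>i. \<exists>U. countable U \<and> U \<subseteq> Collect (openin ?T) \<and> \<Inter>U = G i"
  proof
    fix i
    have "(countable intersection_of openin ?T) (G i)" using assms(4)[of i] unfolding gdelta_in_alt by blast
    then show "\<exists>U. countable U \<and> U \<subseteq> Collect (openin ?T) \<and> \<Inter>U = G i"
      unfolding intersection_of_def by blast
  qed
  then obtain U where U: "\<And>i. countable (U i)" "\<And>i. U i \<subseteq> Collect (openin ?T)" "\<And>i. \<Inter>(U i) = G i"
    by metis
  define W where "W = insert ?C (\<Union>i. U i)"
  have Wc: "countable W" "W \<noteq> {}" using U(1) by (auto simp: W_def)
  define V where "V k = from_nat_into W k" for k
  have rV: "range V = W" using Wc by (simp add: V_def range_from_nat_into)
  have Copen: "sl_open X d M rho ?C"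
    using openin_topspace[of ?T] by (simp add: sl_openin sl_topspace)
  have GC: "G i \<subseteq> ?C" for i using gdelta_in_subset[OF assms(4)[of i]] by (simp add: sl_topspace)
  have Vprop: "sl_open X d M rho (V k) \<and> homotopically_dense X d M rho (V k)" for k
  proof -
    have "V k \<in> W" using rV by blast
    then consider "V k = ?C" | i where "V k \<in> U i" by (auto simp: W_def)
    then show ?thesis
    proof cases
      case 1 then show ?thesis using Copen hd_mono[OF GC[of 0] assms(5)[of 0]] by simp
    next
      case (2 i)
      then have "G i \<subseteq> V k" using U(3)[of i] by blast
      moreover have "sl_open X d M rho (V k)" using U(2)[of i] 2 by (auto simp: sl_openin)
      ultimately show ?thesis using hd_mono assms(5) by blast
    qed
  qed
  have "homotopically_dense X d M rho (\<Inter>k. V k)"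
    by (rule main[OF assms(1,2,3)]) (use Vprop in auto)
  moreover have "(\<Inter>k. V k) \<subseteq> (\<Inter>i. G i)"
  proof -
    have "\<Inter>W \<subseteq> G i" for i
    proof -
      have "U i \<subseteq> W" unfolding W_def by blast
      then have "\<Inter>W \<subseteq> \<Inter>(U i)" by (rule Inter_anti_mono)
      then show ?thesis using U(3)[of i] by simp
    qed
    then have "\<Inter>W \<subseteq> (\<Inter>i. G i)" by (rule INT_greatest)
    moreover have "(\<Inter>k. V k) = \<Inter>W" using rV by simp
    ultimately show ?thesis by simp
  qed
  ultimately show ?thesis by (rule hd_mono[rotated])
qed

end
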